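(* Let $k\ge 1$ and $1\le m\le k$ be integers, and let $-\infty\le\alpha<\beta\le+\infty$. Let $M, G, \widetilde F:(\alpha,\beta)\to\mathbb{R}$ be $C^k$ functions, and let $\mathbb{S}$ denote the set of zeros of $G$ in $(\alpha,\beta)$. Suppose that $$\left(\frac{M(h)}{G(h)}\right)^{(m)}=\frac{\widetilde F(h)}{G^{m+1}(h)}\qquad\text{for all } h\in(\alpha,\beta)\setminus\mathbb{S}.$$ Assume that $\widetilde F$ and $G$ have finitely many zeros in $(\alpha,\beta)$, and that every zero of $M$, $G$ and $\widetilde F$ in $(\alpha,\beta)$ has multiplicity at most $k$. Let $\lambda,\mu,p$ denote the number of zeros of $M$, $\widetilde F$, $G$ in $(\alpha,\beta)$ respectively, counted with multiplicity. Then $$\lambda\le \mu+mp+m.$$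
   Context: A zero $h_0$ of a $C^k$ function $f$ has multiplicity $l$ ($1\le l\le k$) if $f(h_0)=f'(h_0)=\dots=f^{(l-1)}(h_0)=0$ and $f^{(l)}(h_0)\neq 0$. Numbers of zeros "counted with multiplicity" are sums of these multiplicities. *)

theory Defs
  imports "HOL-Analysis.Analysis" "HOL-Library.Extended_Real"
begin

definition ointerval :: "ereal \<Rightarrow> ereal \<Rightarrow> real set" where
  "ointerval a b = {x. a < ereal x \<and> ereal x < b}"

definition Ck_on :: "nat \<Rightarrow> real set \<Rightarrow> (real \<Rightarrow> real) \<Rightarrow> bool" where
  "Ck_on k S f \<longleftrightarrow>
     (\<forall>j<k. \<forall>x\<in>S. ((deriv ^^ j) f has_real_derivative (deriv ^^ Suc j) f x) (at x))
     \<and> continuous_on S ((deriv ^^ k) f)"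

definition zeros_in :: "(real \<Rightarrow> real) \<Rightarrow> real set \<Rightarrow> real set" where
  "zeros_in f S = {x\<in>S. f x = 0}"

definition zero_mult :: "(real \<Rightarrow> real) \<Rightarrow> real \<Rightarrow> nat" where
  "zero_mult f x = (LEAST l. (deriv ^^ l) f x \<noteq> 0)"

definition zeros_mult_le :: "nat \<Rightarrow> (real \<Rightarrow> real) \<Rightarrow> real set \<Rightarrow> bool" where
  "zeros_mult_le k f S \<longleftrightarrow> (\<forall>x\<in>zeros_in f S. \<exists>l\<le>k. (deriv ^^ l) f x \<noteq> 0)"

text \<open>Number of zeros of f in S counted with multiplicity (meaningful for finite zero sets).\<close>
definition count_zeros :: "(real \<Rightarrow> real) \<Rightarrow> real set \<Rightarrow> nat" where
  "count_zeros f S = (\<Sum>x\<in>zeros_in f S. zero_mult f x)"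

end

theory Submission
  imports Defs
begin


lemma Ck_0: "Ck_on 0 S f \<longleftrightarrow> continuous_on S f"
  by (simp add: Ck_on_def)

lemma Ck_Suc: "Ck_on (Suc n) S f \<longleftrightarrow>
   (\<forall>x\<in>S. (f has_real_derivative deriv f x) (at x)) \<and> Ck_on n S (deriv f)"
proof -
  have e: "\<And>j. (deriv ^^ Suc j) f = (deriv ^^ j) (deriv f)"
    by (simp add: funpow_Suc_right del: funpow.simps)
  show ?thesis
    unfolding Ck_on_def e
    by (auto simp: less_Suc_eq_0_disj simp del: funpow.simps) (auto simp: e[symmetric] simp del: funpow.simps)
qed

lemma Ck_cong:
  assumes "open S" "\<And>x. x \<in> S \<Longrightarrow> f x = g x" "Ck_on n S f"
  shows "Ck_on n S g"
proof -
  have ev: "\<And>x. x \<in> S \<Longrightarrow> eventually (\<lambda>y. f y = g y) (nhds x)"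
    using assms(1,2) eventually_nhds by blast
  have hd: "\<And>j x. x \<in> S \<Longrightarrow> (deriv ^^ j) f x = (deriv ^^ j) g x"
    by (rule higher_deriv_cong_ev[OF ev]) auto
  have ev2: "\<And>j x. x \<in> S \<Longrightarrow> eventually (\<lambda>y. (deriv ^^ j) f y = (deriv ^^ j) g y) (nhds x)"
    using assms(1) hd eventually_nhds by blast
  show ?thesis using assms(3) unfolding Ck_on_def
  proof (intro conjI allI impI ballI, goal_cases)
    case (1 j x)
    then have h: "((deriv ^^ j) f has_real_derivative (deriv ^^ Suc j) f x) (at x)" by blast
    have e: "((deriv ^^ j) f has_real_derivative (deriv ^^ Suc j) f x) (at x) \<longleftrightarrow>
             ((deriv ^^ j) g has_real_derivative (deriv ^^ Suc j) g x) (at x)"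
      by (rule DERIV_cong_ev[OF refl ev2[OF 1(3), of j] hd[OF 1(3), of "Suc j"]])
    show ?case using h e by blast
  next
    case 2
    have e: "continuous_on S ((deriv ^^ n) f) = continuous_on S ((deriv ^^ n) g)"
      by (rule continuous_on_cong[OF refl hd])
    show ?case using 2 e by blast
  qed
qed

lemma Ck_subset: "Ck_on n S f \<Longrightarrow> T \<subseteq> S \<Longrightarrow> Ck_on n T f"
  unfolding Ck_on_def by (auto intro: continuous_on_subset)

lemma Ck_mono_Suc: "Ck_on (Suc n) S f \<Longrightarrow> Ck_on n S f"
  unfolding Ck_on_def
  by (auto intro!: continuous_at_imp_continuous_on DERIV_isCont)

lemma Ck_mono: "Ck_on n S f \<Longrightarrow> m \<le> n \<Longrightarrow> Ck_on m S f"
  by (induction n) (auto simp: le_Suc_eq dest: Ck_mono_Suc)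

lemma Ck_diff_imp: "Ck_on n S f \<Longrightarrow> j < n \<Longrightarrow> x \<in> S \<Longrightarrow>
   ((deriv ^^ j) f has_real_derivative (deriv ^^ Suc j) f x) (at x)"
  unfolding Ck_on_def by blast

lemma Ck_cont: "Ck_on n S f \<Longrightarrow> j \<le> n \<Longrightarrow> continuous_on S ((deriv ^^ j) f)"
proof -
  assume a: "Ck_on n S f" "j \<le> n"
  show ?thesis
  proof (cases "j = n")
    case True then show ?thesis using a unfolding Ck_on_def by blast
  next
    case False
    then have "j < n" using a by simp
    then show ?thesis using a unfolding Ck_on_def
      by (auto intro!: continuous_at_imp_continuous_on DERIV_isCont)
  qed
qed

lemma Ck_const: "Ck_on n S (\<lambda>x. c)"
proof (induction n arbitrary: c)
  case 0 then show ?case by (simp add: Ck_0)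
next
  case (Suc n)
  have "deriv (\<lambda>x. c) = (\<lambda>x. 0)" by (rule ext) simp
  then show ?case using Suc by (simp add: Ck_Suc)
qed

lemma Ck_add:
  assumes "open S" "Ck_on n S f" "Ck_on n S g"
  shows "Ck_on n S (\<lambda>x. f x + g x)"
  using assms(2,3)
proof (induction n arbitrary: f g)
  case 0 then show ?case by (auto simp: Ck_0 intro: continuous_on_add)
next
  case (Suc n)
  have d: "\<And>x. x \<in> S \<Longrightarrow> ((\<lambda>x. f x + g x) has_real_derivative deriv f x + deriv g x) (at x)"
    using Suc.prems by (auto simp: Ck_Suc intro!: derivative_eq_intros)
  have "Ck_on n S (\<lambda>x. deriv f x + deriv g x)" using Suc by (auto simp: Ck_Suc)
  then have "Ck_on n S (deriv (\<lambda>x. f x + g x))"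
    by (rule Ck_cong[OF assms(1), rotated]) (rule DERIV_imp_deriv[OF d, symmetric])
  then show ?case using d DERIV_imp_deriv[OF d] by (simp add: Ck_Suc)
qed

lemma Ck_mult:
  assumes "open S" "Ck_on n S f" "Ck_on n S g"
  shows "Ck_on n S (\<lambda>x. f x * g x)"
  using assms(2,3)
proof (induction n arbitrary: f g)
  case 0 then show ?case by (auto simp: Ck_0 intro: continuous_on_mult)
next
  case (Suc n)
  have d: "\<And>x. x \<in> S \<Longrightarrow> ((\<lambda>x. f x * g x) has_real_derivative deriv f x * g x + f x * deriv g x) (at x)"
    using Suc.prems by (auto simp: Ck_Suc intro!: derivative_eq_intros)
  have "Ck_on n S (\<lambda>x. deriv f x * g x + f x * deriv g x)"
    using Suc Ck_mono_Suc[OF Suc.prems(1)] Ck_mono_Suc[OF Suc.prems(2)]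
    by (intro Ck_add assms(1) Suc.IH) (auto simp: Ck_Suc)
  then have "Ck_on n S (deriv (\<lambda>x. f x * g x))"
    by (rule Ck_cong[OF assms(1), rotated]) (rule DERIV_imp_deriv[OF d, symmetric])
  then show ?case using d DERIV_imp_deriv[OF d] by (simp add: Ck_Suc)
qed

lemma Ck_cmult: "open S \<Longrightarrow> Ck_on n S f \<Longrightarrow> Ck_on n S (\<lambda>x. c * f x)"
  by (rule Ck_mult[OF _ Ck_const])

lemma Ck_diff: "open S \<Longrightarrow> Ck_on n S f \<Longrightarrow> Ck_on n S g \<Longrightarrow> Ck_on n S (\<lambda>x. f x - g x)"
  using Ck_add[of S n f "\<lambda>x. (-1) * g x"] Ck_cmult[of S n g "-1"] by simp

lemma Ck_pow: "open S \<Longrightarrow> Ck_on n S f \<Longrightarrow> Ck_on n S (\<lambda>x. f x ^ p)"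
  by (induction p) (auto intro: Ck_const Ck_mult)

lemma Ck_inverse:
  assumes "open S" "Ck_on n S f" "\<And>x. x \<in> S \<Longrightarrow> f x \<noteq> 0"
  shows "Ck_on n S (\<lambda>x. inverse (f x))"
  using assms(2)
proof (induction n)
  case 0 then show ?case using assms(3) by (auto simp: Ck_0 intro!: continuous_intros)
next
  case (Suc n)
  have d: "\<And>x. x \<in> S \<Longrightarrow> ((\<lambda>x. inverse (f x)) has_real_derivative
      (-1) * (deriv f x * (inverse (f x) * inverse (f x)))) (at x)"
    using Suc.prems assms(3) by (auto simp: Ck_Suc power2_eq_square intro!: derivative_eq_intros)
  have "Ck_on n S (\<lambda>x. (-1) * (deriv f x * (inverse (f x) * inverse (f x))))"
    using Suc Ck_mono_Suc[OF Suc.prems(1)] by (intro Ck_cmult Ck_mult assms(1) Suc.IH) (auto simp: Ck_Suc)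
  then have "Ck_on n S (deriv (\<lambda>x. inverse (f x)))"
    by (rule Ck_cong[OF assms(1), rotated]) (rule DERIV_imp_deriv[OF d, symmetric])
  then show ?case using d DERIV_imp_deriv[OF d] by (simp add: Ck_Suc)
qed



lemma Suc_choose': "Suc n choose k = (n choose k) + (if k = 0 then 0 else (n choose (k-1)))"
  by (cases k) simp_all

lemma Ck_leibniz:
  assumes S: "open S" and f: "Ck_on n S f" and g: "Ck_on n S g"
  shows "i \<le> n \<Longrightarrow> z \<in> S \<Longrightarrow> (deriv ^^ i) (\<lambda>w. f w * g w) z =
           (\<Sum>j = 0..i. of_nat (i choose j) * (deriv ^^ j) f z * (deriv ^^ (i-j)) g z)"
proof (induction i arbitrary: z)
  case 0 then show ?case by simp
next
  case (Suc i z)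
  have *: "\<And>j. j \<le> i \<Longrightarrow> ((deriv ^^ j) f has_field_derivative deriv ((deriv ^^ j) f) z) (at z)"
          "\<And>j. j \<le> i \<Longrightarrow> ((deriv ^^ j) g has_field_derivative deriv ((deriv ^^ j) g) z) (at z)"
    using Ck_diff_imp[OF f, of _ z] Ck_diff_imp[OF g, of _ z] Suc.prems by auto
  have IH': "\<And>x. x \<in> S \<Longrightarrow> (deriv ^^ i) (\<lambda>w. f w * g w) x =
           (\<Sum>j = 0..i. of_nat (i choose j) * (deriv ^^ j) f x * (deriv ^^ (i-j)) g x)"
    using Suc.IH Suc.prems by auto
  have sumeq: "(\<Sum>j = 0..i.
               of_nat (i choose j) * (deriv ((deriv ^^ j) f) z * (deriv ^^ (i-j)) g z + deriv ((deriv ^^ (i-j)) g) z * (deriv ^^ j) f z)) =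
            g z * deriv ((deriv ^^ i) f) z + (\<Sum>j = 0..i. (deriv ^^ j) f z * (of_nat (Suc i choose j) * (deriv ^^ (Suc i - j)) g z))"
    apply (simp add: Suc_choose' algebra_simps sum.distrib)
    apply (subst (4) sum_Suc_reindex)
    apply (auto simp: algebra_simps Suc_diff_le intro: sum.cong)
    done
  have "((deriv ^^ i) (\<lambda>w. f w * g w) has_field_derivative
         (\<Sum>j = 0..Suc i. (Suc i choose j) * (deriv ^^ j) f z * (deriv ^^ (Suc i - j)) g z))
        (at z)"
    apply (rule has_field_derivative_transform_within_open
        [of "\<lambda>w. (\<Sum>j = 0..i. of_nat (i choose j) * (deriv ^^ j) f w * (deriv ^^ (i-j)) g w)" _ _ S])
       apply (simp add: algebra_simps)
       apply (rule derivative_eq_intros | simp)+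
           apply (auto intro: DERIV_mult * \<open>open S\<close> Suc.prems IH' [symmetric])
    by (metis (no_types, lifting) mult.commute sum.cong sumeq)
  then show ?case
    unfolding funpow.simps o_apply
    by (simp add: DERIV_imp_deriv)
qed

lemma higher_deriv_cong_open:
  assumes "open S" "\<And>x. x \<in> S \<Longrightarrow> f x = g x" "z \<in> S"
  shows "(deriv ^^ i) f z = (deriv ^^ i) g z"
proof -
  have "eventually (\<lambda>y. f y = g y) (nhds z)"
    using assms eventually_nhds by blast
  then show ?thesis by (rule higher_deriv_cong_ev) simp
qed

lemma mult_transfer:
  assumes S: "open S" and z: "z \<in> S" and g: "Ck_on n S g" and u: "Ck_on n S u"
    and fe: "\<And>x. x \<in> S \<Longrightarrow> f x = g x * u x" and uz: "u z \<noteq> 0" and rn: "r \<le> n"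
    and g0: "\<forall>i<r. (deriv ^^ i) g z = 0" and gr: "(deriv ^^ r) g z \<noteq> 0"
  shows "(\<forall>i<r. (deriv ^^ i) f z = 0) \<and> (deriv ^^ r) f z \<noteq> 0"
proof -
  have L: "\<And>i. i \<le> n \<Longrightarrow> (deriv ^^ i) f z =
      (\<Sum>j = 0..i. of_nat (i choose j) * (deriv ^^ j) g z * (deriv ^^ (i-j)) u z)"
  proof -
    fix i assume i: "i \<le> n"
    have "(deriv ^^ i) f z = (deriv ^^ i) (\<lambda>w. g w * u w) z"
      by (rule higher_deriv_cong_open[OF S _ z]) (rule fe)
    also have "\<dots> = (\<Sum>j = 0..i. of_nat (i choose j) * (deriv ^^ j) g z * (deriv ^^ (i-j)) u z)"
      by (rule Ck_leibniz[OF S g u i z])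
    finally show "(deriv ^^ i) f z = (\<Sum>j = 0..i. of_nat (i choose j) * (deriv ^^ j) g z * (deriv ^^ (i-j)) u z)" .
  qed
  have A1: "\<forall>i<r. (deriv ^^ i) f z = 0"
  proof (intro allI impI)
    fix i assume i: "i < r"
    have "(deriv ^^ i) f z = (\<Sum>j = 0..i. of_nat (i choose j) * (deriv ^^ j) g z * (deriv ^^ (i-j)) u z)"
      using L i rn by simp
    also have "\<dots> = 0" by (rule sum.neutral) (use g0 i in auto)
    finally show "(deriv ^^ i) f z = 0" .
  qed
  have "(deriv ^^ r) f z = (\<Sum>j = 0..r. if j = r then (deriv ^^ r) g z * u z else 0)"
    unfolding L[OF rn] by (rule sum.cong) (auto simp: g0)
  also have "\<dots> = (deriv ^^ r) g z * u z" by (simp add: sum.delta)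
  finally have A2: "(deriv ^^ r) f z = (deriv ^^ r) g z * u z" .
  show ?thesis
  proof (intro conjI)
    show "\<forall>i<r. (deriv ^^ i) f z = 0" by (rule A1)
    show "(deriv ^^ r) f z \<noteq> 0" unfolding A2 using gr uz by simp
  qed
qed

lemma zero_mult_eqI:
  "\<forall>i<r. (deriv ^^ i) f z = 0 \<Longrightarrow> (deriv ^^ r) f z \<noteq> 0 \<Longrightarrow> zero_mult f z = r"
  unfolding zero_mult_def
  by (rule Least_equality) (auto simp: not_less[symmetric])

lemma zero_mult_props:
  assumes "\<exists>l. (deriv ^^ l) f z \<noteq> 0"
  shows "(\<forall>i<zero_mult f z. (deriv ^^ i) f z = 0) \<and> (deriv ^^ zero_mult f z) f z \<noteq> 0"
  using assms unfolding zero_mult_def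
  by (metis (mono_tags, lifting) LeastI_ex not_less_Least)



lemma funpow_deriv_Suc: "(deriv ^^ Suc j) f = (deriv ^^ j) (deriv f)"
  by (simp add: funpow_Suc_right del: funpow.simps)

lemma zm_one: "f x = 0 \<Longrightarrow> deriv f x \<noteq> 0 \<Longrightarrow> zero_mult f x = 1"
  by (rule zero_mult_eqI) auto

lemma zm_pos: "f x = 0 \<Longrightarrow> \<exists>l. (deriv ^^ l) f x \<noteq> 0 \<Longrightarrow> zero_mult f x \<ge> 1"
  using zero_mult_props[of f x] by (cases "zero_mult f x") auto

lemma zm_Suc:
  assumes "f x = 0" "\<exists>l. (deriv ^^ l) (deriv f) x \<noteq> 0"
  shows "zero_mult f x = Suc (zero_mult (deriv f) x)"
proof -
  from zero_mult_props[OF assms(2)] obtain r where r: "r = zero_mult (deriv f) x"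
    "\<forall>i<r. (deriv ^^ i) (deriv f) x = 0" "(deriv ^^ r) (deriv f) x \<noteq> 0" by blast
  have "zero_mult f x = Suc r"
  proof (rule zero_mult_eqI)
    show "\<forall>i<Suc r. (deriv ^^ i) f x = 0"
    proof (intro allI impI)
      fix i assume "i < Suc r"
      then show "(deriv ^^ i) f x = 0" using r assms(1)
        by (cases i) (auto simp: funpow_deriv_Suc simp del: funpow.simps)
    qed
    show "(deriv ^^ Suc r) f x \<noteq> 0" using r by (simp add: funpow_deriv_Suc del: funpow.simps)
  qed
  then show ?thesis using r by simp
qed

lemma finite_if_card_bounded:
  assumes "\<And>B. finite B \<Longrightarrow> B \<subseteq> A \<Longrightarrow> card B \<le> N"
  shows "finite A"
proof (rule ccontr)
  assume "infinite A"
  then obtain B where "finite B" "card B = Suc N" "B \<subseteq> A"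
    using infinite_arbitrarily_large by blast
  then show False using assms by fastforce
qed

lemma rolle_between:
  assumes conv: "is_interval S"
    and d: "\<And>x. x \<in> S - Z \<Longrightarrow> (\<psi> has_real_derivative deriv \<psi> x) (at x)"
    and y: "y \<in> S - Z" and x: "x \<in> S - Z" and yx: "y < x"
    and py: "\<psi> y = 0" and px: "\<psi> x = 0"
  shows "\<exists>w. y < w \<and> w < x \<and> (w \<in> Z \<or> w \<in> zeros_in (deriv \<psi>) (S - Z))"
proof (cases "\<exists>z\<in>Z. y < z \<and> z < x")
  case True then show ?thesis by blast
next
  case False
  have sub: "{y..x} \<subseteq> S - Z"
  proof
    fix t assume t: "t \<in> {y..x}"
    then have "t \<in> S" using conv x y unfolding is_interval_1 by auto
    moreover have "t \<notin> Z" using False t x y by (cases "t = y \<or> t = x") auto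
    ultimately show "t \<in> S - Z" by simp
  qed
  have cont: "continuous_on {y..x} \<psi>"
    using sub d by (intro continuous_at_imp_continuous_on) (auto intro: DERIV_isCont)
  have "\<exists>z. y < z \<and> z < x \<and> DERIV \<psi> z :> 0"
  proof (rule Rolle[OF yx _ cont])
    show "\<psi> y = \<psi> x" using py px by simp
    fix t assume "y < t" "t < x"
    then have "t \<in> {y..x}" by auto
    then have "t \<in> S - Z" using sub by blast
    then show "\<psi> differentiable (at t)" using d real_differentiable_def by blast
  qed
  then obtain z where z: "y < z" "z < x" "DERIV \<psi> z :> 0" by blast
  have "z \<in> {y..x}" using z by auto
  then have zin: "z \<in> S - Z" using sub by blast
  have "deriv \<psi> z = 0" using DERIV_unique[OF d[OF zin] z(3)] .
  then show ?thesis using z zin unfolding zeros_in_def by blast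
qed

lemma card_chain:
  assumes conv: "is_interval S" and Zf: "finite Z"
    and d: "\<And>x. x \<in> S - Z \<Longrightarrow> (\<psi> has_real_derivative deriv \<psi> x) (at x)"
    and Bf: "finite (zeros_in (deriv \<psi>) (S - Z))"
  defines "W \<equiv> zeros_in (deriv \<psi>) (S - Z) \<union> Z"
  shows "finite A' \<Longrightarrow> A' \<subseteq> zeros_in \<psi> (S - Z) \<Longrightarrow> A' \<noteq> {} \<Longrightarrow>
     card A' \<le> card {w \<in> W - A'. w < Max A'} + 1"
proof (induction "card A'" arbitrary: A')
  case 0 then show ?case by simp
next
  case (Suc n A')
  have Wf: "finite W" using Bf Zf W_def by simp
  define x where "x = Max A'"
  have xA: "x \<in> A'" using Suc.prems x_def by simp
  define A'' where "A'' = A' - {x}"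
  show ?case
  proof (cases "A'' = {}")
    case True
    then have "A' = {x}" using xA A''_def by auto
    then show ?thesis by simp
  next
    case False
    define y where "y = Max A''"
    have yA: "y \<in> A''" unfolding y_def by (rule Max_in) (use False A''_def Suc.prems in auto)
    have yx: "y < x" using yA A''_def x_def Suc.prems
      by (metis DiffE Max_ge order_le_neq_trans singletonI)
    have bel: "\<And>a. a \<in> A' \<Longrightarrow> a \<noteq> x \<Longrightarrow> a \<le> y"
      using A''_def y_def Suc.prems by auto
    have cA'': "card A'' = n" using Suc.hyps(2) xA A''_def Suc.prems by simp
    have IH: "card A'' \<le> card {w \<in> W - A''. w < y} + 1"
      using Suc.hyps(1)[OF cA''[symmetric]] Suc.prems False A''_def y_def by auto
    have ySZ: "y \<in> S - Z" "\<psi> y = 0" using yA A''_def Suc.prems unfolding zeros_in_def by auto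
    have xSZ: "x \<in> S - Z" "\<psi> x = 0" using xA Suc.prems unfolding zeros_in_def by auto
    obtain w where w: "y < w" "w < x" "w \<in> W"
      using rolle_between[OF conv d ySZ(1) xSZ(1) yx ySZ(2) xSZ(2)] W_def by blast
    have wA: "w \<notin> A'" using w bel by force
    have sub: "insert w {w \<in> W - A''. w < y} \<subseteq> {w \<in> W - A'. w < x}"
      using w wA yx A''_def by auto
    have "card (insert w {w \<in> W - A''. w < y}) = card {w \<in> W - A''. w < y} + 1"
      using Wf w(1) by simp
    moreover have "card (insert w {w \<in> W - A''. w < y}) \<le> card {w \<in> W - A'. w < x}"
      by (rule card_mono[OF _ sub]) (use Wf in simp)
    moreover have "card A' = card A'' + 1" using cA'' Suc.hyps(2) by simp
    ultimately show ?thesis using IH x_def by simp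
  qed
qed

lemma rolle_count:
  assumes conv: "is_interval S" and Zf: "finite Z"
    and d: "\<And>x. x \<in> S - Z \<Longrightarrow> (\<psi> has_real_derivative deriv \<psi> x) (at x)"
    and Bf: "finite (zeros_in (deriv \<psi>) (S - Z))"
    and Bm: "\<forall>x\<in>zeros_in (deriv \<psi>) (S - Z). \<exists>l. (deriv ^^ l) (deriv \<psi>) x \<noteq> 0"
  shows "finite (zeros_in \<psi> (S - Z)) \<and> (\<forall>x\<in>zeros_in \<psi> (S - Z). \<exists>l. (deriv ^^ l) \<psi> x \<noteq> 0)
     \<and> count_zeros \<psi> (S - Z) \<le> count_zeros (deriv \<psi>) (S - Z) + card Z + 1"
proof -
  define A where "A = zeros_in \<psi> (S - Z)"
  define B where "B = zeros_in (deriv \<psi>) (S - Z)"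
  define W where "W = B \<union> Z"
  have Wf: "finite W" using Bf Zf W_def B_def by simp
  have cc: "\<And>A'. finite A' \<Longrightarrow> A' \<subseteq> A \<Longrightarrow> card A' \<le> card (W - A') + 1"
  proof -
    fix A' assume a: "finite A'" "A' \<subseteq> A"
    show "card A' \<le> card (W - A') + 1"
    proof (cases "A' = {}")
      case True then show ?thesis by simp
    next
      case False
      have "card A' \<le> card {w \<in> W - A'. w < Max A'} + 1"
        using card_chain[OF conv Zf d Bf a(1)] a False A_def W_def B_def by simp
      moreover have "card {w \<in> W - A'. w < Max A'} \<le> card (W - A')"
        by (rule card_mono) (use Wf in auto)
      ultimately show ?thesis by simp
    qed
  qed
  have Af: "finite A"
  proof (rule finite_if_card_bounded[of A "card W + 1"])
    fix B' assume "finite B'" "B' \<subseteq> A"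
    then have "card B' \<le> card (W - B') + 1" by (rule cc)
    moreover have "card (W - B') \<le> card W" by (rule card_mono[OF Wf]) auto
    ultimately show "card B' \<le> card W + 1" by simp
  qed
  have cA: "card A \<le> card (B - A) + card Z + 1"
  proof -
    have "card (W - A) \<le> card ((B - A) \<union> Z)"
      by (rule card_mono) (use Bf Zf B_def W_def in auto)
    also have "\<dots> \<le> card (B - A) + card Z" by (rule card_Un_le)
    finally show ?thesis using cc[OF Af subset_refl] by simp
  qed
  have mex: "\<forall>x\<in>A. \<exists>l. (deriv ^^ l) \<psi> x \<noteq> 0"
  proof
    fix x assume x: "x \<in> A"
    show "\<exists>l. (deriv ^^ l) \<psi> x \<noteq> 0"
    proof (cases "deriv \<psi> x = 0")
      case True
      then have "x \<in> B" using x A_def B_def zeros_in_def by auto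
      then obtain l where "(deriv ^^ l) (deriv \<psi>) x \<noteq> 0" using Bm B_def by blast
      then show ?thesis by (metis funpow_deriv_Suc)
    next
      case False then show ?thesis by (metis funpow_0 funpow_Suc_right o_apply funpow_0)
    qed
  qed
  have zmA: "\<And>x. x \<in> A \<Longrightarrow> zero_mult \<psi> x = 1 + (if x \<in> B then zero_mult (deriv \<psi>) x else 0)"
  proof -
    fix x assume x: "x \<in> A"
    show "zero_mult \<psi> x = 1 + (if x \<in> B then zero_mult (deriv \<psi>) x else 0)"
    proof (cases "x \<in> B")
      case True
      then show ?thesis using zm_Suc[of \<psi> x] x Bm A_def B_def zeros_in_def by auto
    next
      case False
      then have "deriv \<psi> x \<noteq> 0" using x A_def B_def zeros_in_def by auto
      then show ?thesis using zm_one[of \<psi> x] x False A_def zeros_in_def by auto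
    qed
  qed
  have "count_zeros \<psi> (S - Z) = (\<Sum>x\<in>A. 1 + (if x \<in> B then zero_mult (deriv \<psi>) x else 0))"
    unfolding count_zeros_def A_def[symmetric] by (rule sum.cong) (auto simp: zmA)
  also have "\<dots> = (\<Sum>x\<in>A. 1) + (\<Sum>x\<in>A. if x \<in> B then zero_mult (deriv \<psi>) x else 0)"
    by (rule sum.distrib)
  also have "\<dots> = card A + (\<Sum>x\<in>A \<inter> B. zero_mult (deriv \<psi>) x)"
    by (simp add: sum.inter_restrict[OF Af])
  finally have c1: "count_zeros \<psi> (S - Z) = card A + (\<Sum>x\<in>A \<inter> B. zero_mult (deriv \<psi>) x)" .
  have Bfin: "finite B" using Bf B_def by simp
  have "count_zeros (deriv \<psi>) (S - Z) = (\<Sum>x\<in>B \<inter> A. zero_mult (deriv \<psi>) x) + (\<Sum>x\<in>B - A. zero_mult (deriv \<psi>) x)"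
    unfolding count_zeros_def B_def[symmetric] using sum.Int_Diff[OF Bfin] by blast
  moreover have "card (B - A) \<le> (\<Sum>x\<in>B - A. zero_mult (deriv \<psi>) x)"
  proof -
    have "card (B - A) = (\<Sum>x\<in>B - A. 1)" by simp
    also have "\<dots> \<le> (\<Sum>x\<in>B - A. zero_mult (deriv \<psi>) x)"
      by (rule sum_mono) (use Bm B_def zeros_in_def zm_pos in auto)
    finally show ?thesis .
  qed
  ultimately have "count_zeros \<psi> (S - Z) \<le> count_zeros (deriv \<psi>) (S - Z) + card Z + 1"
    using c1 cA by (simp add: Int_commute)
  then show ?thesis using Af mex A_def by simp
qed



lemma taylor_core:
  assumes f: "Ck_on n S f" and pn: "p \<le> n" and z: "\<forall>i<p. (deriv ^^ i) f s = 0"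
    and sub: "{min y s..max y s} \<subseteq> S" and ys: "y \<noteq> s"
  shows "\<exists>t. \<bar>t - s\<bar> \<le> \<bar>y - s\<bar> \<and> t \<in> S \<and> f y = (deriv ^^ p) f t / fact p * (y - s) ^ p"
proof (cases "p = 0")
  case True
  then show ?thesis using sub by (intro exI[of _ y]) auto
next
  case False
  have "\<exists>t. (if y < s then y < t \<and> t < s else s < t \<and> t < y) \<and>
    f y = (\<Sum>m<p. ((deriv ^^ m) f s / fact m) * (y - s)^m) + ((deriv ^^ p) f t / fact p) * (y - s)^p"
  proof (rule Taylor[of p "\<lambda>i. (deriv ^^ i) f" f "min y s" "max y s" s y])
    show "\<forall>m t. m < p \<and> min y s \<le> t \<and> t \<le> max y s \<longrightarrow>
      ((deriv ^^ m) f has_real_derivative (deriv ^^ Suc m) f t) (at t)"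
      using Ck_diff_imp[OF f] pn sub by auto
  qed (use False ys in auto)
  then obtain t where t: "(if y < s then y < t \<and> t < s else s < t \<and> t < y)"
    "f y = (\<Sum>m<p. ((deriv ^^ m) f s / fact m) * (y - s)^m) + ((deriv ^^ p) f t / fact p) * (y - s)^p"
    by blast
  have "(\<Sum>m<p. ((deriv ^^ m) f s / fact m) * (y - s)^m) = 0" using z by simp
  then have "f y = (deriv ^^ p) f t / fact p * (y - s)^p" using t(2) by simp
  moreover have "\<bar>t - s\<bar> \<le> \<bar>y - s\<bar>" "t \<in> S" using t(1) sub
    by (auto split: if_splits)
  ultimately show ?thesis by blast
qed

lemma funpow_add_deriv: "(deriv ^^ j) ((deriv ^^ i) f) = (deriv ^^ (j + i)) f"
  by (simp add: funpow_add)

lemma Ck_higher: "Ck_on n S f \<Longrightarrow> i \<le> n \<Longrightarrow> Ck_on (n - i) S ((deriv ^^ i) f)"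
  unfolding Ck_on_def funpow_add_deriv
  by (auto simp del: funpow.simps simp: funpow_add_deriv[symmetric] funpow_deriv_Suc[symmetric])
     (auto simp: funpow_add_deriv add.commute simp del: funpow.simps)

lemma cont_ball_bound:
  fixes h :: "real \<Rightarrow> real" and s e :: real
  assumes "open S" "s \<in> S" "continuous_on S h" "e > 0"
  shows "\<exists>d>0. ball s d \<subseteq> S \<and> (\<forall>t\<in>ball s d. \<bar>h t - h s\<bar> < e)"
proof -
  have "isCont h s" using assms continuous_on_eq_continuous_at by blast
  then obtain d1 where d1: "d1 > 0" "\<forall>t. dist t s < d1 \<longrightarrow> dist (h t) (h s) < e"
    using assms(4) unfolding continuous_at_eps_delta by blast
  obtain d2 where d2: "d2 > 0" "ball s d2 \<subseteq> S" using assms open_contains_ball by blast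
  show ?thesis
    by (rule exI[of _ "min d1 d2"]) (use d1 d2 in \<open>auto simp: dist_real_def\<close>)
qed

lemma taylor_bound:
  assumes S: "open S" and s: "s \<in> S" and f: "Ck_on n S f" and rn: "r \<le> n"
    and z: "\<forall>j<r. (deriv ^^ j) f s = 0" and i: "i \<le> n"
  shows "\<exists>C\<ge>0. \<exists>d>0. \<forall>y. \<bar>y - s\<bar> < d \<longrightarrow> \<bar>(deriv ^^ i) f y\<bar> \<le> C * \<bar>y - s\<bar> ^ (r - i)"
proof (cases "r \<le> i")
  case True
  obtain d where d: "d > 0" "ball s d \<subseteq> S" "\<forall>t\<in>ball s d. \<bar>(deriv ^^ i) f t - (deriv ^^ i) f s\<bar> < 1"
    using cont_ball_bound[OF S s Ck_cont[OF f i] zero_less_one] by auto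
  show ?thesis
  proof (rule exI[of _ "\<bar>(deriv ^^ i) f s\<bar> + 1"], intro conjI, simp, rule exI[of _ d], intro conjI allI impI)
    show "d > 0" by (rule d)
    fix y assume y: "\<bar>y - s\<bar> < d"
    then have "y \<in> ball s d" by (simp add: dist_real_def abs_minus_commute)
    then have "\<bar>(deriv ^^ i) f y - (deriv ^^ i) f s\<bar> < 1" using d by blast
    then show "\<bar>(deriv ^^ i) f y\<bar> \<le> (\<bar>(deriv ^^ i) f s\<bar> + 1) * \<bar>y - s\<bar> ^ (r - i)"
      using True by simp
  qed
next
  case False
  obtain d where d: "d > 0" "ball s d \<subseteq> S"
    "\<forall>t\<in>ball s d. \<bar>(deriv ^^ r) f t - (deriv ^^ r) f s\<bar> < 1"
    using cont_ball_bound[OF S s Ck_cont[OF f rn] zero_less_one] by auto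
  define B where "B = \<bar>(deriv ^^ r) f s\<bar> + 1"
  have hf: "Ck_on (n - i) S ((deriv ^^ i) f)" by (rule Ck_higher[OF f i])
  show ?thesis
  proof (rule exI[of _ B], intro conjI, simp add: B_def, rule exI[of _ d], intro conjI allI impI)
    show "d > 0" by (rule d)
    fix y assume y: "\<bar>y - s\<bar> < d"
    show "\<bar>(deriv ^^ i) f y\<bar> \<le> B * \<bar>y - s\<bar> ^ (r - i)"
    proof (cases "y = s")
      case True then show ?thesis using z False by (simp add: B_def)
    next
      case ne: False
      have sub: "{min y s..max y s} \<subseteq> S"
        using d(2) y by (auto simp: dist_real_def subset_iff)
      obtain t where t: "\<bar>t - s\<bar> \<le> \<bar>y - s\<bar>" "t \<in> S"
        "(deriv ^^ i) f y = (deriv ^^ (r - i)) ((deriv ^^ i) f) t / fact (r - i) * (y - s) ^ (r - i)"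
      proof -
        have pre1: "r - i \<le> n - i" using rn by simp
        have pre2: "\<forall>j<r-i. (deriv ^^ j) ((deriv ^^ i) f) s = 0"
          using z by (simp add: funpow_add_deriv del: funpow.simps)
        show ?thesis using taylor_core[OF hf pre1 pre2 sub ne] that by blast
      qed
      have "(deriv ^^ (r - i)) ((deriv ^^ i) f) t = (deriv ^^ (r - i + i)) f t"
        by (simp only: funpow_add_deriv)
      also have "r - i + i = r" using False by simp
      finally have "(deriv ^^ (r - i)) ((deriv ^^ i) f) t = (deriv ^^ r) f t" .
      moreover have "\<bar>(deriv ^^ r) f t\<bar> \<le> B"
      proof -
        have "t \<in> ball s d" using t(1) y by (simp add: dist_real_def abs_minus_commute)
        then have "\<bar>(deriv ^^ r) f t - (deriv ^^ r) f s\<bar> < 1" using d(3) by blast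
        then show ?thesis unfolding B_def by arith
      qed
      moreover have "fact (r - i) \<ge> (1::real)" by simp
      ultimately have "\<bar>(deriv ^^ i) f y\<bar> \<le> B / fact (r - i) * \<bar>y - s\<bar> ^ (r - i)"
        using t(3) by (simp add: abs_mult power_abs divide_right_mono mult_right_mono)
      also have "\<dots> \<le> B * \<bar>y - s\<bar> ^ (r - i)"
      proof (rule mult_right_mono)
        have B0: "B \<ge> 0" by (simp add: B_def)
        have "B * 1 \<le> B * fact (r - i)" by (rule mult_left_mono[OF _ B0]) simp
        then show "B / fact (r - i) \<le> B" by (simp add: divide_le_eq)
      qed simp
      finally show ?thesis .
    qed
  qed
qed



lemma taylor_contra:
  assumes S: "open S" and s: "s \<in> S" and f: "Ck_on n S f" and jn: "j < n"
    and z: "\<forall>i<j. (deriv ^^ i) f s = 0" and nz: "(deriv ^^ j) f s \<noteq> 0" and jr: "j < r"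
    and C: "C \<ge> 0" and d: "d > 0"
    and bnd: "\<forall>y. \<bar>y - s\<bar> < d \<longrightarrow> y \<noteq> s \<longrightarrow> \<bar>f y\<bar> \<le> C * \<bar>y - s\<bar> ^ r"
  shows False
proof -
  define c where "c = \<bar>(deriv ^^ j) f s\<bar> / 2"
  have c: "c > 0" using nz c_def by simp
  obtain d1 where d1: "d1 > 0" "ball s d1 \<subseteq> S"
    "\<forall>t\<in>ball s d1. \<bar>(deriv ^^ j) f t - (deriv ^^ j) f s\<bar> < c"
    using cont_ball_bound[OF S s Ck_cont[OF f less_imp_le[OF jn]] c] by auto
  define K where "K = c / (fact j * (C + 1))"
  have K: "K > 0" using c C K_def by simp
  define e where "e = min (min d d1) (min 1 K) / 2"
  have e: "e > 0" "e < d" "e < d1" "e < 1" "e < K" using d d1 K e_def by auto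
  define y where "y = s + e"
  have ys: "y \<noteq> s" "\<bar>y - s\<bar> = e" using e y_def by auto
  have sub: "{min y s..max y s} \<subseteq> S"
    using d1(2) e y_def by (auto simp: dist_real_def subset_iff)
  obtain t where t: "\<bar>t - s\<bar> \<le> \<bar>y - s\<bar>" "t \<in> S" "f y = (deriv ^^ j) f t / fact j * (y - s) ^ j"
    using taylor_core[OF f _ z sub ys(1)] jn by auto
  have tc: "\<bar>(deriv ^^ j) f t\<bar> \<ge> c"
  proof -
    have "t \<in> ball s d1" using t(1) ys e by (simp add: dist_real_def abs_minus_commute)
    then have "\<bar>(deriv ^^ j) f t - (deriv ^^ j) f s\<bar> < c" using d1(3) by blast
    then show ?thesis unfolding c_def by arith
  qed
  have low: "c / fact j * e ^ j \<le> \<bar>f y\<bar>"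
    using t(3) ys tc by (auto simp: abs_mult power_abs intro!: mult_right_mono divide_right_mono)
  have up: "\<bar>f y\<bar> \<le> C * e ^ r" using bnd ys e by auto
  have "e ^ r = e ^ j * e ^ (r - j)" using jr by (simp add: power_add[symmetric])
  moreover have "e ^ (r - j) \<le> e"
  proof -
    have "e ^ (r - j) \<le> e ^ 1" by (rule power_decreasing) (use e jr in auto)
    then show ?thesis by simp
  qed
  ultimately have "C * e ^ r \<le> C * e * e ^ j"
    using C e by (simp add: mult_left_mono mult.assoc mult.left_commute)
  with low up have "c / fact j * e ^ j \<le> (C * e) * e ^ j" by linarith
  then have "c / fact j \<le> C * e" by (rule mult_right_le_imp_le) (use e in simp)
  moreover have "C * e < c / fact j"
  proof -
    have "C * e \<le> C * K" using C e by (simp add: mult_left_mono)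
    also have "C * K = (c / fact j) * (C / (C + 1))" using K_def by (simp add: field_simps)
    also have "\<dots> < c / fact j" using c C by (simp add: divide_less_eq)
    finally show ?thesis .
  qed
  ultimately show False by simp
qed



primrec Qf :: "(real \<Rightarrow> real) \<Rightarrow> nat \<Rightarrow> real \<Rightarrow> real" where
  "Qf G 0 = (\<lambda>x. 1)"
| "Qf G (Suc l) = (\<lambda>x. G x * deriv (Qf G l) x - of_nat (Suc l) * deriv G x * Qf G l x)"

lemma Q_Ck:
  assumes S: "open S" and G: "Ck_on k S G"
  shows "l \<le> k \<Longrightarrow> Ck_on (k - l) S (Qf G l)"
proof (induction l)
  case 0 then show ?case by (simp add: Ck_const)
next
  case (Suc l)
  have IH: "Ck_on (Suc (k - Suc l)) S (Qf G l)"
    using Suc by (simp add: Suc_diff_Suc)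
  have dQ: "Ck_on (k - Suc l) S (deriv (Qf G l))" using IH by (simp add: Ck_Suc)
  have Q: "Ck_on (k - Suc l) S (Qf G l)" using Ck_mono_Suc[OF IH] .
  have G': "Ck_on (k - Suc l) S G" using Ck_mono[OF G] by simp
  have kk: "k = Suc (k - 1)" using Suc.prems by simp
  have "Ck_on (k - 1) S (deriv G)" using G kk by (metis Ck_Suc)
  then have dG: "Ck_on (k - Suc l) S (deriv G)" by (rule Ck_mono) simp
  show ?case
    by (simp only: Qf.simps)
       (intro Ck_diff Ck_mult Ck_cmult S G' dQ Q dG)
qed

lemma Q_inv:
  assumes U: "open U" and G: "Ck_on k U G" and nz: "\<And>x. x \<in> U \<Longrightarrow> G x \<noteq> 0"
  shows "l \<le> k \<Longrightarrow> y \<in> U \<Longrightarrow> (deriv ^^ l) (\<lambda>x. inverse (G x)) y = Qf G l y / G y ^ Suc l"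
proof (induction l arbitrary: y)
  case 0 then show ?case by (simp add: divide_inverse)
next
  case (Suc l y)
  have ev: "eventually (\<lambda>x. (deriv ^^ l) (\<lambda>x. inverse (G x)) x = Qf G l x / G x ^ Suc l) (nhds y)"
  proof -
    have "\<forall>x\<in>U. (deriv ^^ l) (\<lambda>x. inverse (G x)) x = Qf G l x / G x ^ Suc l"
      using Suc by auto
    then show ?thesis using U Suc.prems(2) eventually_nhds by blast
  qed
  have QC: "Ck_on (Suc (k - Suc l)) U (Qf G l)"
    using Q_Ck[OF U G, of l] Suc.prems by (simp add: Suc_diff_Suc)
  have dQ: "(Qf G l has_real_derivative deriv (Qf G l) y) (at y)"
    using QC Suc.prems by (simp add: Ck_Suc)
  have GC: "Ck_on (Suc (k - 1)) U G" using G Suc.prems by simp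
  have "\<forall>x\<in>U. (G has_real_derivative deriv G x) (at x)"
    using GC by (simp only: Ck_Suc) blast
  then have dG: "(G has_real_derivative deriv G y) (at y)" using Suc.prems by blast
  have Gy: "G y \<noteq> 0" using nz Suc.prems by simp
  have D: "((\<lambda>x. Qf G l x / G x ^ Suc l) has_real_derivative
     (deriv (Qf G l) y * G y ^ Suc l - Qf G l y * (of_nat (Suc l) * (deriv G y * G y ^ (Suc l - Suc 0))))
       / (G y ^ Suc l * G y ^ Suc l)) (at y)"
    by (rule DERIV_divide[OF dQ DERIV_power[OF dG]]) (use Gy in simp)
  have eq: "(deriv (Qf G l) y * G y ^ Suc l - Qf G l y * (of_nat (Suc l) * (deriv G y * G y ^ (Suc l - Suc 0))))
       / (G y ^ Suc l * G y ^ Suc l) = Qf G (Suc l) y / G y ^ Suc (Suc l)"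
  proof -
    define g where "g = G y"
    define X where "X = g * deriv (Qf G l) y - of_nat (Suc l) * deriv G y * Qf G l y"
    have gnz: "g \<noteq> 0" using Gy g_def by simp
    have n: "deriv (Qf G l) y * g ^ Suc l - Qf G l y * (of_nat (Suc l) * (deriv G y * g ^ (Suc l - Suc 0)))
        = g ^ l * X" unfolding X_def by (simp add: algebra_simps)
    have dd: "g ^ Suc l * g ^ Suc l = g ^ l * g ^ Suc (Suc l)" by (simp add: power_add[symmetric])
    have "(deriv (Qf G l) y * g ^ Suc l - Qf G l y * (of_nat (Suc l) * (deriv G y * g ^ (Suc l - Suc 0))))
       / (g ^ Suc l * g ^ Suc l) = (g ^ l * X) / (g ^ l * g ^ Suc (Suc l))" unfolding n dd ..
    also have "\<dots> = X / g ^ Suc (Suc l)" using gnz by simp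
    also have "X = Qf G (Suc l) y" unfolding X_def g_def by simp
    finally show ?thesis unfolding g_def .
  qed
  have "(deriv ^^ Suc l) (\<lambda>x. inverse (G x)) y = deriv ((deriv ^^ l) (\<lambda>x. inverse (G x))) y"
    by simp
  also have "\<dots> = deriv (\<lambda>x. Qf G l x / G x ^ Suc l) y"
    by (rule deriv_cong_ev[OF ev refl])
  also have "\<dots> = Qf G (Suc l) y / G y ^ Suc (Suc l)"
    using DERIV_imp_deriv[OF D] eq by simp
  finally show ?case .
qed



lemma F_rep:
  assumes U: "open U" and M: "Ck_on k U M" and G: "Ck_on k U G"
    and nz: "\<And>x. x \<in> U \<Longrightarrow> G x \<noteq> 0" and mk: "m \<le> k" and y: "y \<in> U"
    and hyp: "(deriv ^^ m) (\<lambda>x. M x / G x) y = F y / G y ^ (m + 1)"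
  shows "F y = (\<Sum>i = 0..m. of_nat (m choose i) * (deriv ^^ i) M y * Qf G (m - i) y * G y ^ i)"
proof -
  have Gy: "G y \<noteq> 0" using nz y by simp
  have fe: "(\<lambda>x. M x / G x) = (\<lambda>x. M x * inverse (G x))" by (simp add: divide_inverse)
  have IC: "Ck_on k U (\<lambda>x. inverse (G x))" by (rule Ck_inverse[OF U G nz])
  have "(deriv ^^ m) (\<lambda>x. M x / G x) y =
      (\<Sum>i = 0..m. of_nat (m choose i) * (deriv ^^ i) M y * (deriv ^^ (m - i)) (\<lambda>x. inverse (G x)) y)"
    unfolding fe by (rule Ck_leibniz[OF U M IC mk y])
  also have "\<dots> = (\<Sum>i = 0..m. of_nat (m choose i) * (deriv ^^ i) M y * (Qf G (m - i) y / G y ^ Suc (m - i)))"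
  proof (rule sum.cong[OF refl])
    fix i assume "i \<in> {0..m}"
    have "(deriv ^^ (m - i)) (\<lambda>x. inverse (G x)) y = Qf G (m - i) y / G y ^ Suc (m - i)"
      by (rule Q_inv[OF U G nz le_trans[OF diff_le_self mk] y])
    then show "of_nat (m choose i) * (deriv ^^ i) M y * (deriv ^^ (m - i)) (\<lambda>x. inverse (G x)) y =
        of_nat (m choose i) * (deriv ^^ i) M y * (Qf G (m - i) y / G y ^ Suc (m - i))" by (simp only:)
  qed
  finally have e1: "F y = G y ^ (m + 1) *
      (\<Sum>i = 0..m. of_nat (m choose i) * (deriv ^^ i) M y * (Qf G (m - i) y / G y ^ Suc (m - i)))"
    using hyp Gy by (simp add: field_simps)
  also have "\<dots> = (\<Sum>i = 0..m. G y ^ (m + 1) * (of_nat (m choose i) * (deriv ^^ i) M y * (Qf G (m - i) y / G y ^ Suc (m - i))))"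
    by (rule sum_distrib_left)
  also have "\<dots> = (\<Sum>i = 0..m. of_nat (m choose i) * (deriv ^^ i) M y * Qf G (m - i) y * G y ^ i)"
  proof (rule sum.cong[OF refl])
    fix i assume i: "i \<in> {0..m}"
    have p: "G y ^ (m + 1) = G y ^ i * G y ^ Suc (m - i)"
      using i by (simp add: power_add[symmetric])
    show "G y ^ (m + 1) * (of_nat (m choose i) * (deriv ^^ i) M y * (Qf G (m - i) y / G y ^ Suc (m - i))) =
        of_nat (m choose i) * (deriv ^^ i) M y * Qf G (m - i) y * G y ^ i"
      unfolding p using Gy by (simp add: field_simps)
  qed
  finally show ?thesis .
qed

lemma ev_at_iff: "eventually P (at (s::real)) \<longleftrightarrow> (\<exists>d>0. \<forall>y. \<bar>y - s\<bar> < d \<longrightarrow> y \<noteq> s \<longrightarrow> P y)"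
  by (auto simp: eventually_at dist_real_def)

lemma cont_ev_bound:
  assumes "open S" "s \<in> S" "continuous_on S (h::real \<Rightarrow> real)"
  shows "eventually (\<lambda>y. \<bar>h y\<bar> \<le> \<bar>h s\<bar> + 1) (at s)"
proof -
  obtain d where d: "d > 0" "ball s d \<subseteq> S" "\<forall>t\<in>ball s d. \<bar>h t - h s\<bar> < 1"
    using cont_ball_bound[OF assms zero_less_one] by blast
  show ?thesis unfolding ev_at_iff
  proof (intro exI[of _ d] conjI allI impI)
    show "d > 0" by (rule d)
    fix y assume "\<bar>y - s\<bar> < d"
    then have "y \<in> ball s d" by (simp add: dist_real_def abs_minus_commute)
    then have "\<bar>h y - h s\<bar> < 1" using d by blast
    then show "\<bar>h y\<bar> \<le> \<bar>h s\<bar> + 1" by arith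
  qed
qed

lemma tb_ev:
  assumes "open S" "s \<in> S" "Ck_on n S f" "r \<le> n" "\<forall>j<r. (deriv ^^ j) f s = 0" "i \<le> n"
  shows "\<exists>C\<ge>0. eventually (\<lambda>y. \<bar>(deriv ^^ i) f y\<bar> \<le> C * \<bar>y - s\<bar> ^ (r - i)) (at s)"
proof -
  obtain C d where "C \<ge> 0" "d > 0" "\<forall>y. \<bar>y - s\<bar> < d \<longrightarrow> \<bar>(deriv ^^ i) f y\<bar> \<le> C * \<bar>y - s\<bar> ^ (r - i)"
    using taylor_bound[OF assms] by blast
  then show ?thesis unfolding ev_at_iff by blast
qed

lemma local_bound:
  assumes S: "open S" and s: "s \<in> S" and M: "Ck_on k S M" and G: "Ck_on k S G"
    and Gs: "G s = 0" and mk: "m \<le> k" and k1: "k \<ge> 1" and rk: "r \<le> k"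
    and Mz: "\<forall>j<r. (deriv ^^ j) M s = 0"
    and rep: "eventually (\<lambda>y. F y = (\<Sum>i = 0..m. of_nat (m choose i) * (deriv ^^ i) M y * Qf G (m - i) y * G y ^ i)) (at s)"
  shows "\<exists>C\<ge>0. eventually (\<lambda>y. \<bar>F y\<bar> \<le> C * \<bar>y - s\<bar> ^ r) (at s)"
proof -
  have "\<forall>i. \<exists>C. i \<le> m \<longrightarrow> C \<ge> 0 \<and> eventually (\<lambda>y. \<bar>(deriv ^^ i) M y\<bar> \<le> C * \<bar>y - s\<bar> ^ (r - i)) (at s)"
    using tb_ev[OF S s M rk Mz] mk by (metis le_trans)
  then obtain CM where CM: "\<And>i. i \<le> m \<Longrightarrow> CM i \<ge> 0 \<and> eventually (\<lambda>y. \<bar>(deriv ^^ i) M y\<bar> \<le> CM i * \<bar>y - s\<bar> ^ (r - i)) (at s)"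
    by metis
  obtain CG where CG: "CG \<ge> 0" "eventually (\<lambda>y. \<bar>(deriv ^^ 0) G y\<bar> \<le> CG * \<bar>y - s\<bar> ^ (1 - 0)) (at s)"
    using tb_ev[OF S s G k1 _ le0, of ] Gs by auto
  define CQ where "CQ i = \<bar>Qf G (m - i) s\<bar> + 1" for i
  have QB: "\<And>i. i \<le> m \<Longrightarrow> eventually (\<lambda>y. \<bar>Qf G (m - i) y\<bar> \<le> CQ i) (at s)"
  proof -
    fix i assume "i \<le> m"
    have "Ck_on (k - (m - i)) S (Qf G (m - i))" by (rule Q_Ck[OF S G]) (use mk in simp)
    then have "continuous_on S (Qf G (m - i))" using Ck_cont[of "k - (m - i)" S _ 0] by simp
    then show "eventually (\<lambda>y. \<bar>Qf G (m - i) y\<bar> \<le> CQ i) (at s)"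
      unfolding CQ_def by (rule cont_ev_bound[OF S s])
  qed
  have e1: "eventually (\<lambda>y. \<forall>i\<in>{0..m}. \<bar>(deriv ^^ i) M y\<bar> \<le> CM i * \<bar>y - s\<bar> ^ (r - i)) (at s)"
    by (rule eventually_ball_finite) (use CM in auto)
  have e2: "eventually (\<lambda>y. \<forall>i\<in>{0..m}. \<bar>Qf G (m - i) y\<bar> \<le> CQ i) (at s)"
    by (rule eventually_ball_finite) (use QB in auto)
  have e3: "eventually (\<lambda>y. \<bar>y - s\<bar> < 1) (at s)"
    unfolding ev_at_iff by (intro exI[of _ 1]) auto
  define K where "K = (\<Sum>i = 0..m. of_nat (m choose i) * CM i * CQ i * CG ^ i)"
  have K0: "K \<ge> 0" unfolding K_def using CM CG by (intro sum_nonneg) (auto simp: CQ_def)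
  have "eventually (\<lambda>y. \<bar>F y\<bar> \<le> K * \<bar>y - s\<bar> ^ r) (at s)"
    using rep e1 e2 e3 CG(2)
  proof eventually_elim
    case (elim y)
    define a where "a = \<bar>y - s\<bar>"
    have a: "0 \<le> a" "a < 1" using elim a_def by auto
    have Gb: "\<bar>G y\<bar> \<le> CG * a" using elim(5) a_def by simp
    have "\<bar>F y\<bar> \<le> (\<Sum>i = 0..m. \<bar>of_nat (m choose i) * (deriv ^^ i) M y * Qf G (m - i) y * G y ^ i\<bar>)"
      unfolding elim(1) by (rule sum_abs)
    also have "\<dots> \<le> (\<Sum>i = 0..m. of_nat (m choose i) * CM i * CQ i * CG ^ i * a ^ r)"
    proof (rule sum_mono)
      fix i assume i: "i \<in> {0..m}"
      have b1: "\<bar>(deriv ^^ i) M y\<bar> \<le> CM i * a ^ (r - i)" using elim(2) i a_def by auto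
      have b2: "\<bar>Qf G (m - i) y\<bar> \<le> CQ i" using elim(3) i by auto
      have b3: "\<bar>G y\<bar> ^ i \<le> (CG * a) ^ i" by (rule power_mono[OF Gb]) simp
      have CMi: "CM i \<ge> 0" using CM i by auto
      have CQi: "CQ i \<ge> 0" by (simp add: CQ_def)
      have "\<bar>(deriv ^^ i) M y\<bar> * \<bar>Qf G (m - i) y\<bar> \<le> (CM i * a ^ (r - i)) * CQ i"
        by (rule mult_mono[OF b1 b2]) (use CMi a in auto)
      then have "\<bar>(deriv ^^ i) M y\<bar> * \<bar>Qf G (m - i) y\<bar> * \<bar>G y\<bar> ^ i \<le> (CM i * a ^ (r - i)) * CQ i * (CG * a) ^ i"
        by (rule mult_mono[OF _ b3]) (use CMi CQi a in auto)
      also have "\<dots> = CM i * CQ i * CG ^ i * a ^ (r - i + i)"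
        by (simp add: power_add power_mult_distrib)
      also have "\<dots> \<le> CM i * CQ i * CG ^ i * a ^ r"
      proof (rule mult_left_mono)
        show "a ^ (r - i + i) \<le> a ^ r" by (rule power_decreasing) (use a in auto)
        show "0 \<le> CM i * CQ i * CG ^ i" using CMi CQi CG by simp
      qed
      finally have "\<bar>(deriv ^^ i) M y\<bar> * \<bar>Qf G (m - i) y\<bar> * \<bar>G y\<bar> ^ i \<le> CM i * CQ i * CG ^ i * a ^ r" .
      then have "of_nat (m choose i) * (\<bar>(deriv ^^ i) M y\<bar> * \<bar>Qf G (m - i) y\<bar> * \<bar>G y\<bar> ^ i)
          \<le> of_nat (m choose i) * (CM i * CQ i * CG ^ i * a ^ r)"
        by (rule mult_left_mono) simp
      then show "\<bar>of_nat (m choose i) * (deriv ^^ i) M y * Qf G (m - i) y * G y ^ i\<bar>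
          \<le> of_nat (m choose i) * CM i * CQ i * CG ^ i * a ^ r"
        by (simp add: abs_mult power_abs mult.assoc)
    qed
    also have "\<dots> = K * a ^ r" unfolding K_def by (simp add: sum_distrib_right)
    finally show ?case using a_def by simp
  qed
  then show ?thesis using K0 by blast
qed



lemma ointerval_open: "open (ointerval a b)"
proof -
  have "ointerval a b = ereal -` {a<..<b}" by (auto simp: ointerval_def)
  then show ?thesis by (simp add: open_ereal_vimage)
qed

lemma ointerval_is_interval: "is_interval (ointerval a b)"
  unfolding is_interval_1 ointerval_def
proof (intro ballI allI impI, clarsimp)
  fix x y z :: real
  assume "a < ereal x" "x \<le> z" "z \<le> y" "ereal y < b"
  then show "a < ereal z \<and> ereal z < b"
    by (meson ereal_less_eq(3) le_less_trans less_le_trans)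
qed

lemma zm_le: "(deriv ^^ l) f x \<noteq> 0 \<Longrightarrow> zero_mult f x \<le> l"
  unfolding zero_mult_def by (rule Least_le)

lemma iter:
  assumes Sint: "is_interval S" and Zf: "finite Z" and PC: "Ck_on k (S - Z) P" and mk: "m \<le> k"
    and bf: "finite (zeros_in ((deriv ^^ m) P) (S - Z))"
    and bm: "\<forall>x\<in>zeros_in ((deriv ^^ m) P) (S - Z). \<exists>l. (deriv ^^ l) ((deriv ^^ m) P) x \<noteq> 0"
  shows "j \<le> m \<Longrightarrow> finite (zeros_in ((deriv ^^ (m - j)) P) (S - Z)) \<and>
     (\<forall>x\<in>zeros_in ((deriv ^^ (m - j)) P) (S - Z). \<exists>l. (deriv ^^ l) ((deriv ^^ (m - j)) P) x \<noteq> 0) \<and>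
     count_zeros ((deriv ^^ (m - j)) P) (S - Z) \<le> count_zeros ((deriv ^^ m) P) (S - Z) + j * (card Z + 1)"
proof (induction j)
  case 0 then show ?case using bf bm by simp
next
  case (Suc j)
  define p where "p = m - Suc j"
  have mj: "m - j = Suc p" using Suc.prems p_def by simp
  have e: "(deriv ^^ (m - j)) P = deriv ((deriv ^^ p) P)" unfolding mj by simp
  have pk: "p < k" using Suc.prems mk p_def by simp
  have d: "\<And>x. x \<in> S - Z \<Longrightarrow> ((deriv ^^ p) P has_real_derivative deriv ((deriv ^^ p) P) x) (at x)"
    using Ck_diff_imp[OF PC pk] by simp
  have IH: "finite (zeros_in (deriv ((deriv ^^ p) P)) (S - Z)) \<and>
     (\<forall>x\<in>zeros_in (deriv ((deriv ^^ p) P)) (S - Z). \<exists>l. (deriv ^^ l) (deriv ((deriv ^^ p) P)) x \<noteq> 0) \<and>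
     count_zeros (deriv ((deriv ^^ p) P)) (S - Z) \<le> count_zeros ((deriv ^^ m) P) (S - Z) + j * (card Z + 1)"
    using Suc.IH Suc.prems unfolding e by simp
  have "finite (zeros_in ((deriv ^^ p) P) (S - Z)) \<and>
    (\<forall>x\<in>zeros_in ((deriv ^^ p) P) (S - Z). \<exists>l. (deriv ^^ l) ((deriv ^^ p) P) x \<noteq> 0) \<and>
    count_zeros ((deriv ^^ p) P) (S - Z) \<le> count_zeros (deriv ((deriv ^^ p) P)) (S - Z) + card Z + 1"
    by (rule rolle_count[OF Sint Zf d]) (use IH in auto)
  then show ?case using IH p_def by simp
qed



theorem theorem2p1:
  fixes k m :: nat and \<alpha> \<beta> :: ereal and M G F :: "real \<Rightarrow> real"
  assumes "k \<ge> 1" and "1 \<le> m" and "m \<le> k" and "\<alpha> < \<beta>"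
    and "Ck_on k (ointerval \<alpha> \<beta>) M"
    and "Ck_on k (ointerval \<alpha> \<beta>) G"
    and "Ck_on k (ointerval \<alpha> \<beta>) F"
    and "\<And>h. h \<in> ointerval \<alpha> \<beta> - zeros_in G (ointerval \<alpha> \<beta>) \<Longrightarrow>
           (deriv ^^ m) (\<lambda>x. M x / G x) h = F h / G h ^ (m + 1)"
    and "finite (zeros_in F (ointerval \<alpha> \<beta>))"
    and "finite (zeros_in G (ointerval \<alpha> \<beta>))"
    and "zeros_mult_le k M (ointerval \<alpha> \<beta>)"
    and "zeros_mult_le k G (ointerval \<alpha> \<beta>)"
    and "zeros_mult_le k F (ointerval \<alpha> \<beta>)"
  shows "finite (zeros_in M (ointerval \<alpha> \<beta>)) \<and>
         count_zeros M (ointerval \<alpha> \<beta>)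
           \<le> count_zeros F (ointerval \<alpha> \<beta>) + m * count_zeros G (ointerval \<alpha> \<beta>) + m"
proof -
  note k1 = assms(1) and mk = assms(3)
  define S where "S = ointerval \<alpha> \<beta>"
  have Sopen: "open S" unfolding S_def by (rule ointerval_open)
  have Sint: "is_interval S" unfolding S_def by (rule ointerval_is_interval)
  have MS: "Ck_on k S M" and GS: "Ck_on k S G" and FS: "Ck_on k S F"
    using assms(5,6,7) S_def by auto
  define Z where "Z = zeros_in G S"
  define U where "U = S - Z"
  have Zf: "finite Z" using assms(10) Z_def S_def by simp
  have Uopen: "open U" unfolding U_def using Sopen Zf by (simp add: open_Diff finite_imp_closed)
  have MU: "Ck_on k U M" and GU: "Ck_on k U G" and FU: "Ck_on k U F"
    using MS GS FS U_def by (auto intro: Ck_subset)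
  have Gnz: "\<And>x. x \<in> U \<Longrightarrow> G x \<noteq> 0" using U_def Z_def zeros_in_def by auto
  define P where "P = (\<lambda>x. M x / G x)"
  have Pe: "P = (\<lambda>x. M x * inverse (G x))" unfolding P_def by (simp add: divide_inverse)
  have IGU: "Ck_on k U (\<lambda>x. inverse (G x))" by (rule Ck_inverse[OF Uopen GU Gnz])
  have PC: "Ck_on k U P" unfolding Pe by (rule Ck_mult[OF Uopen MU IGU])
  have hypU: "\<And>h. h \<in> U \<Longrightarrow> (deriv ^^ m) P h = F h / G h ^ (m + 1)"
    using assms(8) unfolding U_def Z_def S_def P_def by blast
  have Fex: "\<And>x. x \<in> zeros_in F S \<Longrightarrow> \<exists>l\<le>k. (deriv ^^ l) F x \<noteq> 0"
    using assms(13) unfolding zeros_mult_le_def S_def by blast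
  have Mex: "\<And>x. x \<in> zeros_in M S \<Longrightarrow> \<exists>l\<le>k. (deriv ^^ l) M x \<noteq> 0"
    using assms(11) unfolding zeros_mult_le_def S_def by blast
  have Gex: "\<And>x. x \<in> zeros_in G S \<Longrightarrow> \<exists>l\<le>k. (deriv ^^ l) G x \<noteq> 0"
    using assms(12) unfolding zeros_mult_le_def S_def by blast
  have FfS: "finite (zeros_in F S)" using assms(9) S_def by simp
  have transfer: "\<And>g u f x. Ck_on k U g \<Longrightarrow> Ck_on k U u \<Longrightarrow> (\<And>y. y \<in> U \<Longrightarrow> f y = g y * u y)
      \<Longrightarrow> x \<in> U \<Longrightarrow> u x \<noteq> 0 \<Longrightarrow> (\<exists>l\<le>k. (deriv ^^ l) g x \<noteq> 0)
      \<Longrightarrow> (\<exists>l. (deriv ^^ l) f x \<noteq> 0) \<and> zero_mult f x = zero_mult g x"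
  proof -
    fix g u f x
    assume g: "Ck_on k U g" and u: "Ck_on k U u" and fe: "\<And>y. y \<in> U \<Longrightarrow> f y = g y * u y"
      and x: "x \<in> U" and ux: "u x \<noteq> 0" and ex: "\<exists>l\<le>k. (deriv ^^ l) g x \<noteq> 0"
    then obtain l where l: "l \<le> k" "(deriv ^^ l) g x \<noteq> 0" by blast
    have rk: "zero_mult g x \<le> k" using zm_le[OF l(2)] l(1) by simp
    have pr: "(\<forall>i<zero_mult g x. (deriv ^^ i) g x = 0) \<and> (deriv ^^ zero_mult g x) g x \<noteq> 0"
      using zero_mult_props l(2) by blast
    have "(\<forall>i<zero_mult g x. (deriv ^^ i) f x = 0) \<and> (deriv ^^ zero_mult g x) f x \<noteq> 0"
      using mult_transfer[OF Uopen x g u fe ux rk] pr by blast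
    then show "(\<exists>l. (deriv ^^ l) f x \<noteq> 0) \<and> zero_mult f x = zero_mult g x"
      using zero_mult_eqI by blast
  qed
  have uC: "Ck_on k U (\<lambda>y. inverse (G y ^ (m + 1)))"
    by (rule Ck_inverse[OF Uopen Ck_pow[OF Uopen GU]]) (use Gnz in simp)
  have zPm: "zeros_in ((deriv ^^ m) P) U = zeros_in F U"
    using hypU Gnz unfolding zeros_in_def by auto
  have Pm_tr: "\<And>x. x \<in> zeros_in F U \<Longrightarrow>
      (\<exists>l. (deriv ^^ l) ((deriv ^^ m) P) x \<noteq> 0) \<and> zero_mult ((deriv ^^ m) P) x = zero_mult F x"
  proof -
    fix x assume x: "x \<in> zeros_in F U"
    have xU: "x \<in> U" using x zeros_in_def by auto
    have "x \<in> zeros_in F S" using x U_def zeros_in_def by auto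
    then have ex: "\<exists>l\<le>k. (deriv ^^ l) F x \<noteq> 0" by (rule Fex)
    show "(\<exists>l. (deriv ^^ l) ((deriv ^^ m) P) x \<noteq> 0) \<and> zero_mult ((deriv ^^ m) P) x = zero_mult F x"
      by (rule transfer[OF FU uC _ xU _ ex]) (use hypU Gnz xU in \<open>auto simp: divide_inverse\<close>)
  qed
  have bf: "finite (zeros_in ((deriv ^^ m) P) (S - Z))"
    using zPm FfS U_def unfolding zeros_in_def by (auto elim: finite_subset[rotated])
  have bm: "\<forall>x\<in>zeros_in ((deriv ^^ m) P) (S - Z). \<exists>l. (deriv ^^ l) ((deriv ^^ m) P) x \<noteq> 0"
    using Pm_tr zPm U_def by auto
  have cPm: "count_zeros ((deriv ^^ m) P) U = count_zeros F U"
    unfolding count_zeros_def zPm by (rule sum.cong) (use Pm_tr in auto)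
  have IT: "finite (zeros_in P U) \<and> count_zeros P U \<le> count_zeros ((deriv ^^ m) P) U + m * (card Z + 1)"
    using iter[OF Sint Zf PC[unfolded U_def] mk bf bm, of m] U_def by simp
  have zP: "zeros_in P U = zeros_in M U"
    using Gnz unfolding zeros_in_def P_def by auto
  have P_tr: "\<And>x. x \<in> zeros_in M U \<Longrightarrow> zero_mult P x = zero_mult M x"
  proof -
    fix x assume x: "x \<in> zeros_in M U"
    have xU: "x \<in> U" using x zeros_in_def by auto
    have "x \<in> zeros_in M S" using x U_def zeros_in_def by auto
    then have ex: "\<exists>l\<le>k. (deriv ^^ l) M x \<noteq> 0" by (rule Mex)
    show "zero_mult P x = zero_mult M x"
      using transfer[OF MU IGU _ xU _ ex, of P] Gnz xU Pe by auto
  qed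
  have cP: "count_zeros P U = count_zeros M U"
    unfolding count_zeros_def zP by (rule sum.cong) (use P_tr in auto)
  have MfU: "finite (zeros_in M U)" using IT zP by simp
  have cU: "count_zeros M U \<le> count_zeros F U + m * (card Z + 1)"
    using IT cP cPm by simp
  have loc: "\<And>s. s \<in> zeros_in M S \<inter> Z \<Longrightarrow> s \<in> zeros_in F S \<and> zero_mult M s \<le> zero_mult F s"
  proof -
    fix s assume sA: "s \<in> zeros_in M S \<inter> Z"
    have sS: "s \<in> S" and Ms: "M s = 0" and Gs: "G s = 0" using sA Z_def zeros_in_def by auto
    define r where "r = zero_mult M s"
    obtain l where l: "l \<le> k" "(deriv ^^ l) M s \<noteq> 0" using Mex sA by blast
    have rk: "r \<le> k" using zm_le[OF l(2)] l(1) r_def by simp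
    have Mz: "\<forall>j<r. (deriv ^^ j) M s = 0" using zero_mult_props l(2) r_def by blast
    have r1: "r \<ge> 1" using zm_pos[of M s] Ms l(2) r_def by blast
    have evU: "eventually (\<lambda>y. y \<in> U) (at s)"
    proof -
      obtain d where d: "d > 0" "ball s d \<subseteq> S" using Sopen sS open_contains_ball by blast
      have "eventually (\<lambda>y. y \<in> S) (at s)"
        unfolding ev_at_iff
        by (rule exI[of _ d]) (use d in \<open>auto simp: dist_real_def abs_minus_commute subset_iff\<close>)
      moreover have "eventually (\<lambda>y. y \<notin> Z) (at s)"
        using islimpt_finite[OF Zf] islimpt_iff_eventually by blast
      ultimately show ?thesis unfolding U_def by eventually_elim auto
    qed
    have rep: "eventually (\<lambda>y. F y = (\<Sum>i = 0..m. of_nat (m choose i) * (deriv ^^ i) M y * Qf G (m - i) y * G y ^ i)) (at s)"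
      using evU
    proof eventually_elim
      case (elim y)
      show ?case by (rule F_rep[where F=F, OF Uopen MU GU Gnz mk elim hypU[OF elim, unfolded P_def]])
    qed
    obtain C where C: "C \<ge> 0" "eventually (\<lambda>y. \<bar>F y\<bar> \<le> C * \<bar>y - s\<bar> ^ r) (at s)"
      using local_bound[OF Sopen sS MS GS Gs mk k1 rk Mz rep] by blast
    obtain d where d: "d > 0" "\<forall>y. \<bar>y - s\<bar> < d \<longrightarrow> y \<noteq> s \<longrightarrow> \<bar>F y\<bar> \<le> C * \<bar>y - s\<bar> ^ r"
      using C(2) unfolding ev_at_iff by blast
    have Fz: "\<forall>j<r. (deriv ^^ j) F s = 0"
    proof (rule ccontr)
      assume "\<not> (\<forall>j<r. (deriv ^^ j) F s = 0)"
      then obtain j where j: "j < r" "(deriv ^^ j) F s \<noteq> 0" by blast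
      define j0 where "j0 = zero_mult F s"
      have pr: "(\<forall>i<j0. (deriv ^^ i) F s = 0) \<and> (deriv ^^ j0) F s \<noteq> 0"
        using zero_mult_props j(2) j0_def by blast
      have j0r: "j0 < r" using zm_le[OF j(2)] j(1) j0_def by simp
      have j0k: "j0 < k" using j0r rk by simp
      show False
        using taylor_contra[OF Sopen sS FS j0k _ _ j0r C(1) d(1) d(2)] pr by blast
    qed
    have Fs: "F s = 0" using Fz r1 by (metis funpow_0 less_le_trans zero_less_one)
    then have sF: "s \<in> zeros_in F S" using sS zeros_in_def by auto
    obtain l' where l': "(deriv ^^ l') F s \<noteq> 0" using Fex[OF sF] by blast
    have "(deriv ^^ zero_mult F s) F s \<noteq> 0" using zero_mult_props l' by blast
    then have "\<not> zero_mult F s < r" using Fz by blast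
    then show "s \<in> zeros_in F S \<and> zero_mult M s \<le> zero_mult F s" using sF r_def by simp
  qed
  have splitM: "zeros_in M S = zeros_in M U \<union> (zeros_in M S \<inter> Z)"
    using U_def zeros_in_def by auto
  have MfZ: "finite (zeros_in M S \<inter> Z)" using Zf by simp
  have MfS: "finite (zeros_in M S)" using splitM MfU MfZ by (metis finite_UnI)
  have disjM: "zeros_in M U \<inter> (zeros_in M S \<inter> Z) = {}" using U_def zeros_in_def by auto
  have cMS: "count_zeros M S = count_zeros M U + (\<Sum>x\<in>zeros_in M S \<inter> Z. zero_mult M x)"
    unfolding count_zeros_def by (subst splitM) (rule sum.union_disjoint[OF MfU MfZ disjM])
  have splitF: "zeros_in F S = zeros_in F U \<union> (zeros_in F S \<inter> Z)"
    using U_def zeros_in_def by auto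
  have FfU: "finite (zeros_in F U)" using FfS U_def zeros_in_def by (auto elim: finite_subset[rotated])
  have FfZ: "finite (zeros_in F S \<inter> Z)" using Zf by simp
  have disjF: "zeros_in F U \<inter> (zeros_in F S \<inter> Z) = {}" using U_def zeros_in_def by auto
  have cFS: "count_zeros F S = count_zeros F U + (\<Sum>x\<in>zeros_in F S \<inter> Z. zero_mult F x)"
    unfolding count_zeros_def by (subst splitF) (rule sum.union_disjoint[OF FfU FfZ disjF])
  have cZ: "(\<Sum>x\<in>zeros_in M S \<inter> Z. zero_mult M x) \<le> (\<Sum>x\<in>zeros_in F S \<inter> Z. zero_mult F x)"
  proof -
    have "(\<Sum>x\<in>zeros_in M S \<inter> Z. zero_mult M x) \<le> (\<Sum>x\<in>zeros_in M S \<inter> Z. zero_mult F x)"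
      by (rule sum_mono) (use loc in blast)
    also have "\<dots> \<le> (\<Sum>x\<in>zeros_in F S \<inter> Z. zero_mult F x)"
      by (rule sum_mono2[OF FfZ]) (use loc in auto)
    finally show ?thesis .
  qed
  have cG: "card Z \<le> count_zeros G S"
  proof -
    have "card Z = (\<Sum>x\<in>Z. 1)" by simp
    also have "\<dots> \<le> (\<Sum>x\<in>Z. zero_mult G x)"
    proof (rule sum_mono)
      fix x assume x: "x \<in> Z"
      then obtain l where "(deriv ^^ l) G x \<noteq> 0" using Gex Z_def by blast
      moreover have "G x = 0" using x Z_def zeros_in_def by auto
      ultimately show "1 \<le> zero_mult G x" using zm_pos by blast
    qed
    finally show ?thesis unfolding count_zeros_def Z_def .
  qed
  have "count_zeros M S \<le> count_zeros F S + m * card Z + m"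
    using cMS cFS cU cZ by (simp add: algebra_simps)
  also have "\<dots> \<le> count_zeros F S + m * count_zeros G S + m"
    using cG by simp
  finally show ?thesis using MfS S_def by simp
qed

end
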